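(* Let $K\ge 2$ and let $\mathbf{d}_1,\mathbf{d}_2\in\mathbb{R}^K$ be the vector-valued signed distance values at the two endpoints of a segment, both satisfying $\min^{(1)}(\mathbf{d})+\min^{(2)}(\mathbf{d})\ge 0$, and suppose the values along the segment are obtained by linear interpolation, $\mathbf{d}_\alpha=(1-\alpha)\mathbf{d}_1+\alpha\mathbf{d}_2$ for $\alpha\in[0,1]$ (as done by a linearly interpolating meshing algorithm), the surface of object $k$ being located where the $k$-th component vanishes. Then there are at most two object surfaces between the two endpoints, and these surfaces do not cross. Precisely: if neither $\mathbf{d}_1$ nor $\mathbf{d}_2$ has a zero entry, then there are at most two indices $k$ whose components have strictly opposite signs at the two endpoints; and if there are two such indices $i\neq j$, with $(\mathbf{d}_1)_i<0$ and $(\mathbf{d}_2)_j<0$, then the zero-crossing parameters $\alpha_i=\frac{-(\mathbf{d}_1)_i}{(\mathbf{d}_2)_i-(\mathbf{d}_1)_i}$ and $\alpha_j=\frac{-(\mathbf{d}_1)_j}{(\mathbf{d}_2)_j-(\mathbf{d}_1)_j}$ satisfy $\alpha_i\le\alpha_j$ (the surfaces are disjoint or at most touch). If an endpoint vector has a zero entry, then that vector has no negative entry, i.e. that endpoint lies on the surface of one or more objects and outside every other object.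
   Context: For a vector $\mathbf{d}\in\mathbb{R}^K$, $\min^{(n)}(\mathbf{d})$ denotes the $n$-th smallest entry of $\mathbf{d}$ (counted with multiplicity). The $k$-th component of a vector-valued signed distance field is the signed distance to object $k$ (negative inside, positive outside), so object $k$'s surface is its zero set. *)

theory Defs
  imports "HOL-Analysis.Analysis" "HOL-Library.Multiset"
begin

definition entries :: "real ^ 'n \<Rightarrow> real multiset" where
  "entries d = image_mset (\<lambda>i. d $ i) (mset_set UNIV)"

definition min_nth :: "nat \<Rightarrow> real ^ 'n \<Rightarrow> real" where
  "min_nth n d = sorted_list_of_multiset (entries d) ! (n - 1)"

end

theory Submission
  imports Defs
begin

lemma key:
  fixes d :: "real ^ 'K"
  assumes "i \<noteq> j"
  shows "min_nth 1 d + min_nth 2 d \<le> d $ i + d $ j"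
proof -
  define L where "L = sorted_list_of_multiset (entries d)"
  define m where "m = max (d $ i) (d $ j)"
  have sL: "sorted L" unfolding L_def by simp
  have mL: "mset L = entries d" unfolding L_def by simp
  have ini: "d $ i \<in> set L" "d $ j \<in> set L"
    using mL unfolding entries_def by (metis finite_class.finite_UNIV finite_set_mset_mset_set image_eqI in_multiset_in_set iso_tuple_UNIV_I set_image_mset)+
  have "size (filter_mset (\<lambda>x. x \<le> m) (entries d)) = card {k. d $ k \<le> m}"
    unfolding entries_def by (simp add: filter_mset_image_mset filter_mset_mset_set)
  moreover have "card {k. d $ k \<le> m} \<ge> card {i, j}"
    by (rule card_mono) (auto simp: m_def)
  ultimately have c2: "length (filter (\<lambda>x. x \<le> m) L) \<ge> 2"
    using assms by (metis mL card_2_iff size_mset mset_filter)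
  then obtain x0 x1 rest where L: "L = x0 # x1 # rest"
    by (cases L; cases "tl L") (auto split: if_splits)
  have x0: "x0 \<le> min (d $ i) (d $ j)" using sL ini L by auto
  have x1: "x1 \<le> m"
  proof (rule ccontr)
    assume "\<not> ?thesis"
    then have "\<forall>y\<in>set (x1 # rest). \<not> y \<le> m" using sL L by auto
    then have "filter (\<lambda>x. x \<le> m) L = filter (\<lambda>x. x \<le> m) [x0]" using L by simp
    then show False using c2 by (simp split: if_splits)
  qed
  have "min_nth 1 d = x0" "min_nth 2 d = x1" unfolding min_nth_def L_def[symmetric] L by simp_all
  then show ?thesis using x0 x1 m_def by linarith
qed


theorem mainTheorem4:
  fixes d1 d2 :: "real ^ 'K"
  assumes K2: "CARD('K) \<ge> 2"
    and h1: "min_nth 1 d1 + min_nth 2 d1 \<ge> 0"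
    and h2: "min_nth 1 d2 + min_nth 2 d2 \<ge> 0"
  shows "((\<forall>k. d1 $ k \<noteq> 0) \<and> (\<forall>k. d2 $ k \<noteq> 0) \<longrightarrow>
            card {k. d1 $ k * d2 $ k < 0} \<le> 2 \<and>
            (\<forall>i j. i \<noteq> j \<and> d1 $ i * d2 $ i < 0 \<and> d1 $ j * d2 $ j < 0
                   \<and> d1 $ i < 0 \<and> d2 $ j < 0 \<longrightarrow>
               - d1 $ i / (d2 $ i - d1 $ i) \<le> - d1 $ j / (d2 $ j - d1 $ j)))
       \<and> ((\<exists>k. d1 $ k = 0) \<longrightarrow> (\<forall>k. d1 $ k \<ge> 0))
       \<and> ((\<exists>k. d2 $ k = 0) \<longrightarrow> (\<forall>k. d2 $ k \<ge> 0))"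
proof -
  have P: "\<And>d::real^'K. min_nth 1 d + min_nth 2 d \<ge> 0 \<Longrightarrow> i \<noteq> j \<Longrightarrow> d $ i + d $ j \<ge> 0" for i j
    using key by (meson order_trans)
  have Q: "card {k. d $ k < 0} \<le> Suc 0" if h: "min_nth 1 d + min_nth 2 d \<ge> 0" for d :: "real^'K"
  proof (subst card_le_Suc0_iff_eq)
    show "finite {k. d $ k < 0}" by simp
    show "\<forall>x\<in>{k. d $ k < 0}. \<forall>y\<in>{k. d $ k < 0}. x = y"
    proof (intro ballI)
      fix x y assume "x \<in> {k. d $ k < 0}" "y \<in> {k. d $ k < 0}"
      then have "d $ x + d $ y < 0" by simp
      then show "x = y" using P[OF h, of x y] by linarith
    qed
  qed
  have A: "\<forall>k. d1 $ k \<noteq> 0 \<Longrightarrow> \<forall>k. d2 $ k \<noteq> 0 \<Longrightarrow> card {k. d1 $ k * d2 $ k < 0} \<le> 2"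
  proof -
    have "{k. d1 $ k * d2 $ k < 0} \<subseteq> {k. d1 $ k < 0} \<union> {k. d2 $ k < 0}"
      by (auto simp: mult_less_0_iff)
    moreover have "card {k. d1 $ k < 0} \<le> Suc 0"
      by (rule Q[OF h1])
    moreover have "card {k. d2 $ k < 0} \<le> Suc 0"
      by (rule Q[OF h2])
    moreover have "card {k. d1 $ k * d2 $ k < 0} \<le> card ({k. d1 $ k < 0} \<union> {k. d2 $ k < 0})"
      by (rule card_mono) (auto simp: mult_less_0_iff)
    moreover have "card ({k. d1 $ k < 0} \<union> {k. d2 $ k < 0}) \<le> card {k. d1 $ k < 0} + card {k. d2 $ k < 0}"
      by (rule card_Un_le)
    ultimately show ?thesis by linarith
  qed
  have B: "- d1 $ i / (d2 $ i - d1 $ i) \<le> - d1 $ j / (d2 $ j - d1 $ j)"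
    if "i \<noteq> j" "d1 $ i * d2 $ i < 0" "d1 $ j * d2 $ j < 0" "d1 $ i < 0" "d2 $ j < 0" for i j
  proof -
    have a: "d2 $ i > 0" "d1 $ j > 0" using that by (auto simp: mult_less_0_iff)
    have s: "d1 $ i + d1 $ j \<ge> 0" "d2 $ i + d2 $ j \<ge> 0" using P[OF h1] P[OF h2] that by auto
    define a where "a = - d1 $ i"
    define b where "b = d2 $ i"
    define c where "c = d1 $ j"
    define e where "e = - d2 $ j"
    have pos: "a > 0" "b > 0" "c > 0" "e > 0" using a that by (auto simp: a_def b_def c_def e_def)
    have "a * e \<le> c * b"
      using s pos by (intro mult_mono) (auto simp: a_def b_def c_def e_def)
    then have "a * (c + e) \<le> c * (b + a)" by (simp add: algebra_simps)
    moreover have q: "b + a > 0" "c + e > 0" using pos by auto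
    ultimately have "a / (b + a) * (c + e) \<le> c" by (simp add: pos_divide_le_eq mult.commute)
    then have "a / (b + a) \<le> c / (c + e)" using q by (simp add: pos_le_divide_eq)
    moreover have "- d1 $ i / (d2 $ i - d1 $ i) = a / (b + a)" by (simp add: a_def b_def)
    moreover have "- d1 $ j / (d2 $ j - d1 $ j) = c / (c + e)"
      by (simp add: c_def e_def divide_simps) (simp add: algebra_simps)
    ultimately show ?thesis by simp
  qed
  have C: "(\<exists>k. d $ k = 0) \<longrightarrow> (\<forall>k. d $ k \<ge> 0)" if h: "min_nth 1 d + min_nth 2 d \<ge> 0" for d :: "real^'K"
  proof (intro impI allI)
    fix k assume "\<exists>k. d $ k = 0"
    then obtain l where l: "d $ l = 0" by blast
    show "d $ k \<ge> 0"
    proof (cases "k = l")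
      case True then show ?thesis using l by simp
    next
      case False then show ?thesis using P[OF h False] l by linarith
    qed
  qed
  show ?thesis using A B C[OF h1] C[OF h2] by blast
qed

end
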